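(* Let $X$ and $Y$ be finite $T_0$-spaces. If $X$ is homotopy equivalent to $Y$, then $\overline{\mathrm{rank}}(X)=\overline{\mathrm{rank}}(Y)$, where $\overline{\mathrm{rank}}(X):=|X|-\mathrm{rank}(X_M)$.
   Context: A finite $T_0$-space is identified with a finite poset via $x\le y$ iff $U_x\subseteq U_y$, where $U_x$ is the minimal open set containing $x$. For a labelling $X=\{x_1,\dots,x_n\}$, $X_M=(x_{i,j})$ is the $n\times n$ matrix with $x_{i,j}=0$ if $x_i\le x_j$ and $x_{i,j}=1$ otherwise; its rank (as a real matrix) does not depend on the labelling. *)

theory Defs
  imports "HOL-Analysis.Analysis" "Jordan_Normal_Form.DL_Rank"
begin

text \<open>Minimal open set U_x of a point x of a topological space (intersection of all
open sets containing x; for finite spaces this is itself open).\<close>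
definition minimal_open :: "'a topology \<Rightarrow> 'a \<Rightarrow> 'a set" where
  "minimal_open X x = \<Inter>{U. openin X U \<and> x \<in> U}"

definition fin_leq :: "'a topology \<Rightarrow> 'a \<Rightarrow> 'a \<Rightarrow> bool" where
  "fin_leq X x y \<longleftrightarrow> minimal_open X x \<subseteq> minimal_open X y"

definition finite_T0_space :: "'a topology \<Rightarrow> bool" where
  "finite_T0_space X \<longleftrightarrow> finite (topspace X) \<and> t0_space X"

text \<open>A fixed labelling x_1,...,x_n of the points of X (the rank does not depend on it).\<close>
definition labelling :: "'a topology \<Rightarrow> 'a list" where
  "labelling X = (SOME xs. distinct xs \<and> set xs = topspace X)"

definition space_matrix :: "'a topology \<Rightarrow> real mat" where
  "space_matrix X =
     (let xs = labelling X; n = length xs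
      in mat n n (\<lambda>(i, j). if fin_leq X (xs ! i) (xs ! j) then 0 else 1))"

definition rank_bar :: "'a topology \<Rightarrow> int" where
  "rank_bar X = int (card (topspace X)) - int (vec_space.rank (card (topspace X)) (space_matrix X))"

end

theory Submission
  imports Defs
begin

definition po :: "'a set \<Rightarrow> ('a \<Rightarrow> 'a \<Rightarrow> bool) \<Rightarrow> bool" where
  "po S lq \<longleftrightarrow> (\<forall>x\<in>S. lq x x) \<and> (\<forall>x\<in>S. \<forall>y\<in>S. lq x y \<and> lq y x \<longrightarrow> x = y)
     \<and> (\<forall>x\<in>S. \<forall>y\<in>S. \<forall>z\<in>S. lq x y \<longrightarrow> lq y z \<longrightarrow> lq x z)"

lemma po_D: assumes "po S lq"
  shows "x \<in> S \<Longrightarrow> lq x x" "x \<in> S \<Longrightarrow> y \<in> S \<Longrightarrow> lq x y \<Longrightarrow> lq y x \<Longrightarrow> x = y"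
    "x \<in> S \<Longrightarrow> y \<in> S \<Longrightarrow> z \<in> S \<Longrightarrow> lq x y \<Longrightarrow> lq y z \<Longrightarrow> lq x z"
  using assms unfolding po_def by blast+

lemma po_subset: "po S lq \<Longrightarrow> T \<subseteq> S \<Longrightarrow> po T lq"
  unfolding po_def by blast

lemma po_flip: "po S lq \<Longrightarrow> po S (\<lambda>a b. lq b a)"
  unfolding po_def by blast

definition GM :: "('a \<Rightarrow> 'a \<Rightarrow> real) \<Rightarrow> 'a list \<Rightarrow> real mat" where
  "GM F xs = mat (length xs) (length xs) (\<lambda>(i,j). F (xs!i) (xs!j))"

lemma GM_carrier[simp]: "GM F xs \<in> carrier_mat (length xs) (length xs)"
  unfolding GM_def by simp

lemma GM_index[simp]: "i < length xs \<Longrightarrow> j < length xs \<Longrightarrow> GM F xs $$ (i,j) = F (xs!i) (xs!j)"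
  unfolding GM_def by simp

lemma GM_dim[simp]: "dim_row (GM F xs) = length xs" "dim_col (GM F xs) = length xs"
  unfolding GM_def by simp_all

lemma sign_sq: "(of_int (sign p) :: real) * of_int (sign p) = 1"
  by (simp add: sign_def)

lemma relabel_det:
  assumes dx: "distinct xs" and dy: "distinct ys" and st: "set xs = set ys"
  shows "Determinant.det (GM F ys) = Determinant.det (GM F xs)"
proof -
  define n where "n = length xs"
  have ny: "length ys = n" using distinct_card[OF dx] distinct_card[OF dy] st n_def by metis
  define p where "p i = (if i < n then (THE k. k < n \<and> xs ! k = ys ! i) else i)" for i
  have ex1: "\<exists>!k. k < n \<and> xs ! k = ys ! i" if "i < n" for i
    using distinct_Ex1[OF dx, of "ys ! i"] that ny st nth_mem[of i ys] unfolding n_def by auto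
  have pin: "p i < n" and pxs: "xs ! p i = ys ! i" if "i < n" for i
    using theI'[OF ex1[OF that]] that by (auto simp: p_def)
  have inj: "inj_on p {0..<n}"
  proof (rule inj_onI)
    fix i j assume "i \<in> {0..<n}" "j \<in> {0..<n}" "p i = p j"
    then have "ys ! i = ys ! j" using pxs \<open>i \<in> {0..<n}\<close> \<open>j \<in> {0..<n}\<close> by (metis atLeastLessThan_iff)
    then show "i = j" using dy ny \<open>i \<in> {0..<n}\<close> \<open>j \<in> {0..<n}\<close> nth_eq_iff_index_eq by fastforce
  qed
  have "p ` {0..<n} \<subseteq> {0..<n}" using pin by auto
  then have "bij_betw p {0..<n} {0..<n}"
    using inj by (simp add: bij_betw_def endo_inj_surj)
  then have perm: "p permutes {0..<n}"
    by (rule bij_imp_permutes) (simp add: p_def)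
  define A where "A = GM F xs"
  have A: "A \<in> carrier_mat n n" unfolding A_def n_def by simp
  define B1 where "B1 = mat n n (\<lambda>(i,j). A $$ (p i, j))"
  have dB1: "Determinant.det B1 = of_int (sign p) * Determinant.det A"
    unfolding B1_def by (rule det_permute_rows[OF A perm])
  have B1: "B1 \<in> carrier_mat n n" unfolding B1_def by simp
  have tB1: "transpose_mat B1 \<in> carrier_mat n n" using B1 by simp
  define C where "C = mat n n (\<lambda>(i,j). transpose_mat B1 $$ (p i, j))"
  have dC: "Determinant.det C = of_int (sign p) * Determinant.det (transpose_mat B1)"
    unfolding C_def by (rule det_permute_rows[OF tB1 perm])
  have "C = transpose_mat (GM F ys)"
  proof (rule eq_matI)
    fix i j assume "i < dim_row (transpose_mat (GM F ys))" "j < dim_col (transpose_mat (GM F ys))"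
    then have ij: "i < n" "j < n" using ny by auto
    show "C $$ (i, j) = transpose_mat (GM F ys) $$ (i, j)"
      using ij pin[OF ij(1)] pin[OF ij(2)] pxs[OF ij(1)] pxs[OF ij(2)] ny
      by (simp add: C_def B1_def A_def n_def)
  qed (use ny in \<open>auto simp: C_def\<close>)
  then have "Determinant.det C = Determinant.det (GM F ys)"
    using det_transpose[of "GM F ys" n] ny by (metis GM_carrier)
  moreover have "Determinant.det (transpose_mat B1) = Determinant.det B1"
    using det_transpose[OF B1] .
  ultimately show ?thesis using dC dB1 sign_sq[of p] unfolding A_def
    by (metis mult.assoc mult_1)
qed

lemma flip_det: "Determinant.det (GM (\<lambda>a b. F b a) xs) = Determinant.det (GM F xs)"
proof -
  have "GM (\<lambda>a b. F b a) xs = transpose_mat (GM F xs)"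
    by (rule eq_matI) auto
  then show ?thesis using det_transpose[OF GM_carrier] by simp
qed

definition Mq :: "('a \<Rightarrow> 'a \<Rightarrow> bool) \<Rightarrow> 'a \<Rightarrow> 'a \<Rightarrow> real" where
  "Mq lq a b = (if lq a b then 0 else 1)"

lemma down_beat_det:
  assumes "lq x x" "lq x' x'" "lq x' x" "\<not> lq x x'"
    and "\<forall>z\<in>set ys. lq z x \<longleftrightarrow> lq z x'"
  shows "Determinant.det (GM (Mq lq) (x # x' # ys)) = - Determinant.det (GM (Mq lq) (x' # ys))"
proof -
  define xs where "xs = x # x' # ys"
  define N where "N = length xs"
  define A where "A = GM (Mq lq) xs"
  have A: "A \<in> carrier_mat N N" unfolding A_def N_def by simp
  have N2: "1 < N" unfolding N_def xs_def by simp
  define B where "B = addcol (-1) 0 1 A"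
  have B: "B \<in> carrier_mat N N" unfolding B_def mat_addcol_def using A by auto
  have dB: "Determinant.det B = Determinant.det A"
    unfolding B_def by (rule det_addcol[OF N2 _ A]) simp
  have B0: "B $$ (i, 0) = (if i = 0 then -1 else 0)" if "i < N" for i
  proof -
    have "B $$ (i, 0) = - A $$ (i, 1) + A $$ (i, 0)"
      using that A N2 unfolding B_def by simp
    also have "\<dots> = (if i = 0 then -1 else 0)"
    proof (cases i)
      case 0 then show ?thesis using assms N2 by (simp add: A_def xs_def Mq_def)
    next
      case (Suc k)
      show ?thesis
      proof (cases k)
        case 0 then show ?thesis using assms N2 Suc by (simp add: A_def xs_def Mq_def)
      next
        case (Suc m)
        then have "m < length ys" using that \<open>i = Suc k\<close> by (simp add: N_def xs_def)
        then have "ys ! m \<in> set ys" by simp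
        then show ?thesis using assms that \<open>i = Suc k\<close> Suc
          by (simp add: A_def xs_def Mq_def N_def)
      qed
    qed
    finally show ?thesis .
  qed
  have "Determinant.det B = (\<Sum>i<N. B $$ (i,0) * cofactor B i 0)"
    by (rule laplace_expansion_column[OF B]) (use N2 in simp)
  also have "\<dots> = (\<Sum>i<N. if i = 0 then - cofactor B 0 0 else 0)"
    by (rule sum.cong) (auto simp: B0)
  also have "\<dots> = - cofactor B 0 0" using N2 by simp
  also have "cofactor B 0 0 = Determinant.det (mat_delete B 0 0)"
    by (simp add: cofactor_def)
  also have "mat_delete B 0 0 = GM (Mq lq) (x' # ys)"
  proof (rule eq_matI)
    fix i j assume "i < dim_row (GM (Mq lq) (x' # ys))" "j < dim_col (GM (Mq lq) (x' # ys))"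
    then have ij: "i < length (x' # ys)" "j < length (x' # ys)" by auto
    then have "Suc i < N" "Suc j < N" by (auto simp: N_def xs_def)
    moreover have "GM (Mq lq) (x # x' # ys) $$ (Suc i, Suc j) = GM (Mq lq) (x' # ys) $$ (i, j)"
      using ij by simp
    ultimately show "mat_delete B 0 0 $$ (i, j) = GM (Mq lq) (x' # ys) $$ (i, j)"
      using ij A unfolding mat_delete_def B_def A_def xs_def N_def
      by simp
  qed (use B in \<open>auto simp: N_def xs_def\<close>)
  finally show ?thesis using dB unfolding A_def xs_def by simp
qed

lemma po_minimal:
  assumes "finite B" "B \<noteq> {}" "po B lq"
  shows "\<exists>m\<in>B. \<forall>z\<in>B. lq z m \<longrightarrow> z = m"
proof -
  define key where "key y = card {z\<in>B. lq z y}" for y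
  obtain m where m: "m \<in> B" "key m = Min (key ` B)"
  proof -
    have "Min (key ` B) \<in> key ` B" using Min_in[of "key ` B"] assms by auto
    then show ?thesis using that by (metis imageE)
  qed
  have "\<forall>z\<in>B. lq z m \<longrightarrow> z = m"
  proof (intro ballI impI, rule ccontr)
    fix z assume z: "z \<in> B" "lq z m" "z \<noteq> m"
    have "{w\<in>B. lq w z} \<subset> {w\<in>B. lq w m}"
    proof
      show "{w\<in>B. lq w z} \<subseteq> {w\<in>B. lq w m}"
        using assms(3) z m unfolding po_def by blast
      have "m \<notin> {w\<in>B. lq w z}" using assms(3) z m unfolding po_def by blast
      moreover have "m \<in> {w\<in>B. lq w m}" using assms(3) m unfolding po_def by blast
      ultimately show "{w\<in>B. lq w z} \<noteq> {w\<in>B. lq w m}" by blast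
    qed
    then have "key z < key m" unfolding key_def
      by (rule psubset_card_mono[rotated]) (use assms in simp)
    moreover have "key m \<le> key z" using m z assms by simp
    ultimately show False by simp
  qed
  then show ?thesis using m by blast
qed

lemma lin_ext:
  assumes "finite S" "po S lq"
  shows "\<exists>ys. distinct ys \<and> set ys = S \<and> (\<forall>i<length ys. \<forall>j<i. \<not> lq (ys!i) (ys!j))"
  using assms
proof (induction "card S" arbitrary: S)
  case 0
  then show ?case by (intro exI[of _ "[]"]) auto
next
  case (Suc k)
  then have ne: "S \<noteq> {}" by auto
  obtain m where m: "m \<in> S" "\<forall>z\<in>S. lq z m \<longrightarrow> z = m"
    using po_minimal[OF Suc.prems(1) ne Suc.prems(2)] by blast
  have "k = card (S - {m})" using Suc.hyps(2) m by simp
  then obtain ys where ys: "distinct ys" "set ys = S - {m}"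
    "\<forall>i<length ys. \<forall>j<i. \<not> lq (ys!i) (ys!j)"
    using Suc.hyps(1)[of "S - {m}"] Suc.prems po_subset[of S lq "S - {m}"] by auto
  show ?case
  proof (intro exI[of _ "m # ys"] conjI allI impI)
    show "distinct (m # ys)" using ys by simp
    show "set (m # ys) = S" using ys m by auto
    fix i j assume ij: "i < length (m # ys)" "j < i"
    then obtain i' where i': "i = Suc i'" "i' < length ys" by (cases i) auto
    show "\<not> lq ((m # ys) ! i) ((m # ys) ! j)"
    proof (cases j)
      case 0
      have "ys ! i' \<in> S - {m}" using ys i' by (metis nth_mem)
      then show ?thesis using m 0 i' by auto
    next
      case (Suc j')
      then show ?thesis using ys(3) i' ij by auto
    qed
  qed
qed

lemma det_NZ:
  assumes "distinct xs" "po (set xs) lq"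
  shows "Determinant.det (GM (\<lambda>a b. if lq a b then -1 else 0) xs) \<noteq> 0"
proof -
  obtain ys where ys: "distinct ys" "set ys = set xs" "\<forall>i<length ys. \<forall>j<i. \<not> lq (ys!i) (ys!j)"
    using lin_ext[of "set xs" lq] assms by auto
  let ?F = "\<lambda>a b. if lq a b then -1 else (0::real)"
  have "upper_triangular (GM ?F ys)"
    unfolding upper_triangular_def using ys(3) by auto
  moreover have "0 \<notin> set (diag_mat (GM ?F ys))"
  proof -
    have "\<forall>i<length ys. lq (ys!i) (ys!i)" using assms(2) ys(2) unfolding po_def
      by (metis nth_mem)
    then show ?thesis unfolding diag_mat_def by auto
  qed
  ultimately have "Determinant.det (GM ?F ys) \<noteq> 0"
    using upper_triangular_imp_det_eq_0_iff[OF GM_carrier] by blast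
  then show ?thesis using relabel_det[OF assms(1) ys(1) ys(2)[symmetric], of ?F] by simp
qed

lemma rank_GM:
  assumes "distinct xs" "po (set xs) lq"
  shows "int (length xs) - int (vec_space.rank (length xs) (GM (Mq lq) xs))
     = (if Determinant.det (GM (Mq lq) xs) = 0 then 1 else 0)"
proof -
  define n where "n = length xs"
  define A where "A = GM (Mq lq) xs"
  have A: "A \<in> carrier_mat n n" unfolding A_def n_def by simp
  show ?thesis
  proof (cases "Determinant.det A = 0")
    case False
    then have "vec_space.rank n A = n" using vec_space.det_rank_iff[OF A] by simp
    then show ?thesis using False unfolding A_def n_def by simp
  next
    case True
    then have "vec_space.rank n A \<noteq> n" using vec_space.det_rank_iff[OF A] by simp
    moreover have "vec_space.rank n A \<le> n" using vec_space.rank_le_nc[OF A] .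
    moreover have "n \<le> vec_space.rank n A + 1"
    proof -
      define J where "J = mat n n (\<lambda>_. -1::real)"
      have J: "J \<in> carrier_mat n n" unfolding J_def by simp
      have rJ: "vec_space.rank n J \<le> 1"
        by (rule vec_space.rank_le_1_product_entries[OF J, of "\<lambda>_. -1" "\<lambda>_. 1"]) (simp add: J_def)
      have "A + J = GM (\<lambda>a b. if lq a b then -1 else 0) xs"
        by (rule eq_matI) (auto simp: A_def J_def n_def Mq_def)
      then have "Determinant.det (A + J) \<noteq> 0" using det_NZ[OF assms] by simp
      then have "vec_space.rank n (A + J) = n"
        using vec_space.det_rank_iff[of "A + J" n] A J by simp
      then show ?thesis using vec_space.rank_subadditive[OF A J] rJ by simp
    qed
    ultimately show ?thesis using True unfolding A_def n_def by simp
  qed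
qed

definition lab :: "'a set \<Rightarrow> 'a list" where
  "lab S = (SOME xs. distinct xs \<and> set xs = S)"

lemma lab: "finite S \<Longrightarrow> distinct (lab S) \<and> set (lab S) = S"
  unfolding lab_def by (rule someI_ex) (metis finite_distinct_list)

definition dz :: "('a \<Rightarrow> 'a \<Rightarrow> bool) \<Rightarrow> 'a set \<Rightarrow> bool" where
  "dz lq S \<longleftrightarrow> Determinant.det (GM (Mq lq) (lab S)) = 0"

lemma dz_any: "finite S \<Longrightarrow> distinct xs \<Longrightarrow> set xs = S \<Longrightarrow>
   dz lq S \<longleftrightarrow> Determinant.det (GM (Mq lq) xs) = 0"
  unfolding dz_def using relabel_det[of xs "lab S" "Mq lq"] lab[of S] by auto

lemma dz_flip: "dz (\<lambda>a b. lq b a) S \<longleftrightarrow> dz lq S"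
proof -
  have "GM (Mq (\<lambda>a b. lq b a)) xs = GM (\<lambda>a b. Mq lq b a) xs" for xs :: "'a list"
    unfolding Mq_def by simp
  then show ?thesis unfolding dz_def using flip_det[of "Mq lq"] by metis
qed

definition dbeat :: "'a set \<Rightarrow> ('a \<Rightarrow> 'a \<Rightarrow> bool) \<Rightarrow> 'a \<Rightarrow> 'a \<Rightarrow> bool" where
  "dbeat S lq x x' \<longleftrightarrow> x \<in> S \<and> x' \<in> S \<and> x' \<noteq> x \<and> lq x' x \<and> (\<forall>y\<in>S. lq y x \<and> y \<noteq> x \<longrightarrow> lq y x')"

definition core :: "'a set \<Rightarrow> ('a \<Rightarrow> 'a \<Rightarrow> bool) \<Rightarrow> bool" where
  "core S lq \<longleftrightarrow> (\<forall>x x'. \<not> dbeat S lq x x' \<and> \<not> dbeat S (\<lambda>a b. lq b a) x x')"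

lemma core_flip: "core S (\<lambda>a b. lq b a) \<longleftrightarrow> core S lq"
  unfolding core_def by auto

lemma dz_dbeat:
  assumes "finite S" "po S lq" "dbeat S lq x x'"
  shows "dz lq S \<longleftrightarrow> dz lq (S - {x})"
proof -
  obtain ys where ys: "distinct ys" "set ys = S - {x, x'}"
    using finite_distinct_list[of "S - {x, x'}"] assms(1) by auto
  have xS: "x \<in> S" "x' \<in> S" "x' \<noteq> x" "lq x' x" and bt: "\<forall>y\<in>S. lq y x \<and> y \<noteq> x \<longrightarrow> lq y x'"
    using assms(3) unfolding dbeat_def by auto
  have d1: "distinct (x # x' # ys)" "set (x # x' # ys) = S" using ys xS by auto
  have d2: "distinct (x' # ys)" "set (x' # ys) = S - {x}" using ys xS by auto
  have c: "lq x x" "lq x' x'" "\<not> lq x x'" using po_D[OF assms(2)] xS by metis+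
  have "\<forall>z\<in>set ys. lq z x \<longleftrightarrow> lq z x'"
  proof
    fix z assume "z \<in> set ys"
    then have "z \<in> S" "z \<noteq> x" using ys by auto
    then show "lq z x \<longleftrightarrow> lq z x'" using bt po_D(3)[OF assms(2), of z x' x] xS by blast
  qed
  then have "Determinant.det (GM (Mq lq) (x # x' # ys)) = - Determinant.det (GM (Mq lq) (x' # ys))"
    using down_beat_det[of lq x x' ys] c xS by blast
  then show ?thesis using dz_any[OF assms(1) d1] dz_any[of "S - {x}", OF _ d2] assms(1) by auto
qed

lemma dz_beat:
  assumes "finite S" "po S lq" "dbeat S lq x x' \<or> dbeat S (\<lambda>a b. lq b a) x x'"
  shows "dz lq S \<longleftrightarrow> dz lq (S - {x})"
  using assms(3)
proof
  assume "dbeat S lq x x'" then show ?thesis by (rule dz_dbeat[OF assms(1,2)])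
next
  assume "dbeat S (\<lambda>a b. lq b a) x x'"
  then have "dz (\<lambda>a b. lq b a) S \<longleftrightarrow> dz (\<lambda>a b. lq b a) (S - {x})"
    by (rule dz_dbeat[OF assms(1) po_flip[OF assms(2)]])
  then show ?thesis using dz_flip[of lq S] dz_flip[of lq "S - {x}"] by simp
qed

definition mono_into :: "'a set \<Rightarrow> ('a \<Rightarrow> 'a \<Rightarrow> bool) \<Rightarrow> 'b set \<Rightarrow> ('b \<Rightarrow> 'b \<Rightarrow> bool) \<Rightarrow> ('a \<Rightarrow> 'b) \<Rightarrow> bool" where
  "mono_into S lq T lq' f \<longleftrightarrow> (\<forall>x\<in>S. f x \<in> T) \<and> (\<forall>x\<in>S. \<forall>y\<in>S. lq x y \<longrightarrow> lq' (f x) (f y))"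

definition fstep :: "'a set \<Rightarrow> ('a \<Rightarrow> 'a \<Rightarrow> bool) \<Rightarrow> 'b set \<Rightarrow> ('b \<Rightarrow> 'b \<Rightarrow> bool) \<Rightarrow> ('a \<Rightarrow> 'b) \<Rightarrow> ('a \<Rightarrow> 'b) \<Rightarrow> bool" where
  "fstep S lq T lq' f g \<longleftrightarrow> mono_into S lq T lq' f \<and> mono_into S lq T lq' g \<and>
     ((\<forall>x\<in>S. lq' (f x) (g x)) \<or> (\<forall>x\<in>S. lq' (g x) (f x)))"

abbreviation fence where "fence S lq T lq' \<equiv> (fstep S lq T lq')\<^sup>*\<^sup>*"

lemma mono_into_comp: "mono_into S l1 T l2 f \<Longrightarrow> mono_into T l2 U l3 g \<Longrightarrow> mono_into S l1 U l3 (g \<circ> f)"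
  unfolding mono_into_def by auto

lemma mono_into_id: "po S lq \<Longrightarrow> T \<subseteq> S \<Longrightarrow> mono_into T lq S lq id"
  unfolding mono_into_def by auto

lemma fence_sym: "fence S l1 T l2 f g \<Longrightarrow> fence S l1 T l2 g f"
proof (induction rule: rtranclp_induct)
  case base then show ?case by simp
next
  case (step y z)
  then have "fstep S l1 T l2 z y" unfolding fstep_def by blast
  then show ?case using step.IH by (rule converse_rtranclp_into_rtranclp)
qed

lemma fence_post:
  assumes g: "mono_into T l2 U l3 g" and "fence S l1 T l2 f f'"
  shows "fence S l1 U l3 (g \<circ> f) (g \<circ> f')"
  using assms(2)
proof (induction rule: rtranclp_induct)
  case base then show ?case by simp
next
  case (step y z)
  have "fstep S l1 U l3 (g \<circ> y) (g \<circ> z)"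
    using step.hyps(2) g unfolding fstep_def mono_into_def by auto
  then show ?case using step.IH by (rule rtranclp.rtrancl_into_rtrancl[rotated])
qed

lemma fence_pre:
  assumes h: "mono_into R l0 S l1 h" and "fence S l1 T l2 f f'"
  shows "fence R l0 T l2 (f \<circ> h) (f' \<circ> h)"
  using assms(2)
proof (induction rule: rtranclp_induct)
  case base then show ?case by simp
next
  case (step y z)
  have "fstep R l0 T l2 (y \<circ> h) (z \<circ> h)"
    using step.hyps(2) h unfolding fstep_def mono_into_def by auto
  then show ?case using step.IH by (rule rtranclp.rtrancl_into_rtrancl[rotated])
qed

lemma fence_widen:
  assumes "T \<subseteq> T'" "fence S l1 T l2 f g"
  shows "fence S l1 T' l2 f g"
  using assms(2)
proof (induction rule: rtranclp_induct)
  case base then show ?case by simp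
next
  case (step y z)
  have "fstep S l1 T' l2 y z"
    using step.hyps(2) assms(1) unfolding fstep_def mono_into_def by auto
  then show ?case using step.IH by (rule rtranclp.rtrancl_into_rtrancl[rotated])
qed

lemma core_below_id:
  assumes "finite C" "po C lq" "core C lq" "mono_into C lq C lq h" "\<forall>c\<in>C. lq (h c) c"
  shows "\<forall>c\<in>C. h c = c"
proof (rule ccontr)
  assume "\<not> (\<forall>c\<in>C. h c = c)"
  then have ne: "{c\<in>C. h c \<noteq> c} \<noteq> {}" by auto
  obtain m where m: "m \<in> {c\<in>C. h c \<noteq> c}" "\<forall>z\<in>{c\<in>C. h c \<noteq> c}. lq z m \<longrightarrow> z = m"
  proof -
    have fin: "finite {c\<in>C. h c \<noteq> c}" using assms(1) by simp
    have po: "po {c\<in>C. h c \<noteq> c} lq" by (rule po_subset[OF assms(2)]) auto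
    show ?thesis using po_minimal[OF fin ne po] that by blast
  qed
  have "dbeat C lq m (h m)"
    unfolding dbeat_def
  proof (intro conjI ballI impI)
    show "m \<in> C" "h m \<noteq> m" using m by auto
    show "h m \<in> C" "lq (h m) m" using m assms(4,5) unfolding mono_into_def by auto
    fix y assume y: "y \<in> C" "lq y m \<and> y \<noteq> m"
    then have "h y = y" using m by auto
    moreover have "lq (h y) (h m)" using assms(4) y m unfolding mono_into_def by auto
    ultimately show "lq y (h m)" by simp
  qed
  then show False using assms(3) unfolding core_def by blast
qed

lemma mono_into_flip: "mono_into S (\<lambda>a b. l1 b a) T (\<lambda>a b. l2 b a) f \<longleftrightarrow> mono_into S l1 T l2 f"
  unfolding mono_into_def by auto

lemma core_above_id:
  assumes "finite C" "po C lq" "core C lq" "mono_into C lq C lq h" "\<forall>c\<in>C. lq c (h c)"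
  shows "\<forall>c\<in>C. h c = c"
proof (rule core_below_id[of C "\<lambda>a b. lq b a" h])
  show "finite C" by fact
  show "po C (\<lambda>a b. lq b a)" by (rule po_flip[OF assms(2)])
  show "core C (\<lambda>a b. lq b a)" using assms(3) core_flip by metis
  show "mono_into C (\<lambda>a b. lq b a) C (\<lambda>a b. lq b a) h" using assms(4) mono_into_flip by metis
  show "\<forall>c\<in>C. lq c (h c)" by fact
qed

lemma core_fence_id:
  assumes "finite C" "po C lq" "core C lq" "fence C lq C lq h id"
  shows "\<forall>c\<in>C. h c = c"
  using assms(4)
proof (induction rule: converse_rtranclp_induct)
  case base then show ?case by simp
next
  case (step y z)
  have m: "mono_into C lq C lq y" using step.hyps(1) unfolding fstep_def by blast
  have "(\<forall>x\<in>C. lq (y x) (z x)) \<or> (\<forall>x\<in>C. lq (z x) (y x))"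
    using step.hyps(1) unfolding fstep_def by blast
  then show ?case
  proof
    assume "\<forall>x\<in>C. lq (y x) (z x)"
    then have "\<forall>x\<in>C. lq (y x) x" using step.IH by simp
    then show ?thesis using core_below_id[OF assms(1-3) m] by blast
  next
    assume "\<forall>x\<in>C. lq (z x) (y x)"
    then have "\<forall>x\<in>C. lq x (y x)" using step.IH by simp
    then show ?thesis using core_above_id[OF assms(1-3) m] by blast
  qed
qed

lemma retract_dbeat:
  assumes "po S lq" "dbeat S lq x x'"
  shows "mono_into S lq (S - {x}) lq (\<lambda>y. if y = x then x' else y)"
    "\<forall>y\<in>S. lq ((\<lambda>y. if y = x then x' else y) y) y"
proof -
  have xS: "x \<in> S" "x' \<in> S" "x' \<noteq> x" "lq x' x" and bt: "\<forall>y\<in>S. lq y x \<and> y \<noteq> x \<longrightarrow> lq y x'"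
    using assms(2) unfolding dbeat_def by auto
  note D = po_D[OF assms(1)]
  show "mono_into S lq (S - {x}) lq (\<lambda>y. if y = x then x' else y)"
    unfolding mono_into_def
  proof (intro conjI ballI impI)
    fix a assume "a \<in> S" then show "(if a = x then x' else a) \<in> S - {x}" using xS by auto
  next
    fix a b assume ab: "a \<in> S" "b \<in> S" "lq a b"
    show "lq (if a = x then x' else a) (if b = x then x' else b)"
    proof (cases "a = x"; cases "b = x")
      assume "a = x" "b = x" then show ?thesis using D(1) xS by simp
    next
      assume "a = x" "b \<noteq> x" then show ?thesis using D(3)[of x' x b] xS ab by simp
    next
      assume "a \<noteq> x" "b = x" then show ?thesis using bt ab by simp
    next
      assume "a \<noteq> x" "b \<noteq> x" then show ?thesis using ab by simp
    qed
  qed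
  show "\<forall>y\<in>S. lq ((\<lambda>y. if y = x then x' else y) y) y"
    using D(1) xS by simp
qed

lemma beat_step0:
  assumes "po S lq" "dbeat S lq x x' \<or> dbeat S (\<lambda>a b. lq b a) x x'"
  shows "mono_into S lq (S - {x}) lq (\<lambda>y. if y = x then x' else y) \<and>
    fstep S lq S lq (\<lambda>y. if y = x then x' else y) id"
  using assms(2)
proof
  assume b: "dbeat S lq x x'"
  note r = retract_dbeat[OF assms(1) b]
  have m: "mono_into S lq S lq (\<lambda>y. if y = x then x' else y)" using r(1) unfolding mono_into_def by blast
  have "fstep S lq S lq (\<lambda>y. if y = x then x' else y) id"
    unfolding fstep_def using m r(2) mono_into_id[OF assms(1), of S] by auto
  then show ?thesis using r(1) by blast
next
  assume b: "dbeat S (\<lambda>a b. lq b a) x x'"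
  note r = retract_dbeat[OF po_flip[OF assms(1)] b]
  have r1: "mono_into S lq (S - {x}) lq (\<lambda>y. if y = x then x' else y)"
    using r(1) mono_into_flip by metis
  have m: "mono_into S lq S lq (\<lambda>y. if y = x then x' else y)" using r1 unfolding mono_into_def by blast
  have "fstep S lq S lq (\<lambda>y. if y = x then x' else y) id"
    unfolding fstep_def using m r(2) mono_into_id[OF assms(1), of S] by auto
  then show ?thesis using r1 by blast
qed

lemmas beat_step = beat_step0[THEN conjunct1] beat_step0[THEN conjunct2]

lemma core_exists:
  assumes "finite S" "po S lq"
  shows "\<exists>C r. C \<subseteq> S \<and> core C lq \<and> (dz lq C \<longleftrightarrow> dz lq S) \<and> mono_into S lq C lq r
     \<and> (\<forall>c\<in>C. r c = c) \<and> fence S lq S lq r id"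
  using assms
proof (induction "card S" arbitrary: S rule: less_induct)
  case less
  show ?case
  proof (cases "core S lq")
    case True
    show ?thesis
      by (rule exI[of _ S], rule exI[of _ id]) (use True mono_into_id[OF less.prems(2), of S] in auto)
  next
    case False
    then obtain x x' where b: "dbeat S lq x x' \<or> dbeat S (\<lambda>a b. lq b a) x x'"
      unfolding core_def by blast
    then have xS: "x \<in> S" unfolding dbeat_def by auto
    define S' where "S' = S - {x}"
    define rx where "rx = (\<lambda>y. if y = x then x' else y)"
    have "card S > 0" using xS less.prems(1) card_gt_0_iff by blast
    then have lt: "card S' < card S" unfolding S'_def using xS less.prems(1) by simp
    have po': "po S' lq" using po_subset[OF less.prems(2)] unfolding S'_def by blast
    obtain C r where C: "C \<subseteq> S'" "core C lq" "dz lq C \<longleftrightarrow> dz lq S'" "mono_into S' lq C lq r"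
      "\<forall>c\<in>C. r c = c" "fence S' lq S' lq r id"
      using less.hyps[OF lt _ po'] less.prems(1) unfolding S'_def by auto
    note bs = beat_step[OF less.prems(2) b]
    have m: "mono_into S lq S' lq rx" using bs(1) unfolding rx_def S'_def .
    have "fence S lq S' lq (r \<circ> rx) (id \<circ> rx)" by (rule fence_pre[OF m C(6)])
    then have f1: "fence S lq S lq (r \<circ> rx) rx" using fence_widen[of S' S] unfolding S'_def by auto
    have "fstep S lq S lq rx id" using bs(2) unfolding rx_def .
    then have f2: "fence S lq S lq (r \<circ> rx) id" using f1 by (rule rtranclp.rtrancl_into_rtrancl[rotated])
    show ?thesis
    proof (rule exI[of _ C], rule exI[of _ "r \<circ> rx"], intro conjI)
      show "C \<subseteq> S" using C(1) unfolding S'_def by auto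
      show "core C lq" by (rule C(2))
      show "dz lq C \<longleftrightarrow> dz lq S" using C(3) dz_beat[OF less.prems b] unfolding S'_def by simp
      show "mono_into S lq C lq (r \<circ> rx)" by (rule mono_into_comp[OF m C(4)])
      show "\<forall>c\<in>C. (r \<circ> rx) c = c" using C(1,5) unfolding S'_def rx_def by auto
      show "fence S lq S lq (r \<circ> rx) id" by (rule f2)
    qed
  qed
qed

lemma iso_dz:
  assumes "finite C" "mono_into C l1 D l2 p" "mono_into D l2 C l1 q"
    "\<forall>c\<in>C. q (p c) = c" "\<forall>d\<in>D. p (q d) = d"
  shows "dz l1 C \<longleftrightarrow> dz l2 D"
proof -
  obtain xs where xs: "distinct xs" "set xs = C" using lab[OF assms(1)] by blast
  have inj: "inj_on p C" using assms(4) by (intro inj_on_inverseI[where g = q]) auto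
  have im: "p ` C = D"
  proof
    show "p ` C \<subseteq> D" using assms(2) unfolding mono_into_def by auto
    show "D \<subseteq> p ` C"
    proof
      fix d assume "d \<in> D"
      then have "q d \<in> C" "p (q d) = d" using assms(3,5) unfolding mono_into_def by auto
      then show "d \<in> p ` C" by force
    qed
  qed
  have fD: "finite D" using im assms(1) by auto
  have d2: "distinct (map p xs)" "set (map p xs) = D" using xs inj im by (auto simp: distinct_map)
  have lqiff: "l2 (p a) (p b) \<longleftrightarrow> l1 a b" if "a \<in> C" "b \<in> C" for a b
  proof
    assume "l2 (p a) (p b)"
    then have "l1 (q (p a)) (q (p b))" using assms(2,3) that unfolding mono_into_def by auto
    then show "l1 a b" using assms(4) that by simp
  next
    assume "l1 a b" then show "l2 (p a) (p b)" using assms(2) that unfolding mono_into_def by auto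
  qed
  have "GM (Mq l2) (map p xs) = GM (Mq l1) xs"
  proof (rule eq_matI)
    fix i j assume "i < dim_row (GM (Mq l1) xs)" "j < dim_col (GM (Mq l1) xs)"
    then have ij: "i < length xs" "j < length xs" by auto
    then have "xs ! i \<in> C" "xs ! j \<in> C" using xs by auto
    then show "GM (Mq l2) (map p xs) $$ (i, j) = GM (Mq l1) xs $$ (i, j)"
      using ij lqiff by (simp add: Mq_def)
  qed auto
  then show ?thesis using dz_any[OF assms(1) xs] dz_any[OF fD d2] by simp
qed

theorem comb_main:
  assumes "finite S" "po S l1" "finite T" "po T l2"
    "mono_into S l1 T l2 f" "mono_into T l2 S l1 g"
    "fence S l1 S l1 (g \<circ> f) id" "fence T l2 T l2 (f \<circ> g) id"
  shows "dz l1 S \<longleftrightarrow> dz l2 T"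
proof -
  obtain C rS where C: "C \<subseteq> S" "core C l1" "dz l1 C \<longleftrightarrow> dz l1 S" "mono_into S l1 C l1 rS"
      "\<forall>c\<in>C. rS c = c" "fence S l1 S l1 rS id"
    using core_exists[OF assms(1,2)] by blast
  obtain D rT where D: "D \<subseteq> T" "core D l2" "dz l2 D \<longleftrightarrow> dz l2 T" "mono_into T l2 D l2 rT"
      "\<forall>c\<in>D. rT c = c" "fence T l2 T l2 rT id"
    using core_exists[OF assms(3,4)] by blast
  have key: "\<forall>c\<in>C. (rS \<circ> g \<circ> rT \<circ> f) c = c"
    if S: "finite S" "po S l1" "finite T" "po T l2"
    "mono_into S l1 T l2 f" "mono_into T l2 S l1 g"
    "fence S l1 S l1 (g \<circ> f) id"
    and C: "C \<subseteq> S" "core C l1" "mono_into S l1 C l1 rS" "\<forall>c\<in>C. rS c = c"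
    and D: "mono_into T l2 T l2 rT" "fence T l2 T l2 rT id"
    for S l1 T l2 f g C rS rT
  proof -
    have "fence S l1 T l2 (rT \<circ> f) (id \<circ> f)" by (rule fence_pre[OF S(5) D(2)])
    then have "fence S l1 S l1 (g \<circ> (rT \<circ> f)) (g \<circ> (id \<circ> f))" by (rule fence_post[OF S(6)])
    then have "fence S l1 S l1 (g \<circ> rT \<circ> f) (g \<circ> f)" by (simp add: comp_assoc)
    then have "fence S l1 S l1 (g \<circ> rT \<circ> f) id" using S(7) by (rule rtranclp_trans)
    then have "fence S l1 C l1 (rS \<circ> (g \<circ> rT \<circ> f)) (rS \<circ> id)" by (rule fence_post[OF C(3)])
    then have "fence C l1 C l1 (rS \<circ> (g \<circ> rT \<circ> f) \<circ> id) (rS \<circ> id \<circ> id)"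
      by (rule fence_pre[OF mono_into_id[OF S(2) C(1)]])
    then have f1: "fence C l1 C l1 (rS \<circ> g \<circ> rT \<circ> f) rS"
      by (simp add: comp_assoc)
    have mC: "mono_into C l1 C l1 rS" using C(3,1) unfolding mono_into_def by auto
    have "fstep C l1 C l1 rS id"
      unfolding fstep_def using mC mono_into_id[OF po_subset[OF S(2) C(1)], of C] C(4) po_D(1)[OF S(2)] C(1)
      by auto
    then have "fence C l1 C l1 (rS \<circ> g \<circ> rT \<circ> f) id"
      using f1 by (meson rtranclp.rtrancl_into_rtrancl)
    then show ?thesis
      by (rule core_fence_id[OF finite_subset[OF C(1) S(1)] po_subset[OF S(2) C(1)] C(2)])
  qed
  have mT: "mono_into T l2 T l2 rT" using D(4,1) unfolding mono_into_def by auto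
  have mS: "mono_into S l1 S l1 rS" using C(4,1) unfolding mono_into_def by auto
  have k1: "\<forall>c\<in>C. (rS \<circ> g \<circ> rT \<circ> f) c = c"
    by (rule key[OF assms(1-7) C(1,2,4,5) mT D(6)])
  have k2: "\<forall>c\<in>D. (rT \<circ> f \<circ> rS \<circ> g) c = c"
    by (rule key[OF assms(3,4,1,2,6,5,8) D(1,2,4,5) mS C(6)])
  have p: "mono_into C l1 D l2 (rT \<circ> f)"
    using mono_into_comp[OF assms(5) D(4)] C(1) unfolding mono_into_def by auto
  have q: "mono_into D l2 C l1 (rS \<circ> g)"
    using mono_into_comp[OF assms(6) C(4)] D(1) unfolding mono_into_def by auto
  have "dz l1 C \<longleftrightarrow> dz l2 D"
    by (rule iso_dz[OF finite_subset[OF C(1) assms(1)] p q]) (use k1 k2 in auto)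
  then show ?thesis using C(3) D(3) by simp
qed

lemma mo_in: "x \<in> topspace X \<Longrightarrow> x \<in> minimal_open X x"
  unfolding minimal_open_def by auto

lemma mo_sub: "openin X U \<Longrightarrow> x \<in> U \<Longrightarrow> minimal_open X x \<subseteq> U"
  unfolding minimal_open_def by auto

lemma mo_open:
  assumes "finite (topspace X)" "x \<in> topspace X"
  shows "openin X (minimal_open X x)"
  unfolding minimal_open_def
proof (rule openin_Inter)
  have "{U. openin X U \<and> x \<in> U} \<subseteq> Pow (topspace X)" using openin_subset by auto
  then show "finite {U. openin X U \<and> x \<in> U}" using assms(1) finite_subset by blast
  show "{U. openin X U \<and> x \<in> U} \<noteq> {}" using assms(2) by auto
qed auto

lemma po_top:
  assumes "finite_T0_space X"
  shows "po (topspace X) (fin_leq X)"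
  unfolding po_def
proof (intro conjI ballI impI)
  fix x y assume xy: "x \<in> topspace X" "y \<in> topspace X" "fin_leq X x y \<and> fin_leq X y x"
  show "x = y"
  proof (rule ccontr)
    assume ne: "x \<noteq> y"
    have t0: "t0_space X" using assms by (simp add: finite_T0_space_def)
    obtain U where U: "openin X U" "x \<notin> U \<longleftrightarrow> y \<in> U"
      using t0_space_def[THEN meta_eq_to_obj_eq, THEN iffD1, rule_format, OF t0 xy(1) xy(2) ne] by blast
    have mx: "minimal_open X x = minimal_open X y" using xy(3) unfolding fin_leq_def by auto
    show False
    proof (cases "y \<in> U")
      case True
      then have "minimal_open X y \<subseteq> U" using mo_sub[OF U(1)] by blast
      moreover have "x \<in> minimal_open X y" using mo_in[OF xy(1)] mx by simp
      moreover have "x \<notin> U" using U(2) True by simp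
      ultimately show False by blast
    next
      case False
      then have xU: "x \<in> U" using U(2) by simp
      then have "minimal_open X x \<subseteq> U" using mo_sub[OF U(1)] by blast
      moreover have "y \<in> minimal_open X x" using mo_in[OF xy(2)] mx by simp
      ultimately show False using False by blast
    qed
  qed
next
  fix x assume "x \<in> topspace X" then show "fin_leq X x x" by (simp add: fin_leq_def)
next
  fix x y z assume "fin_leq X x y" "fin_leq X y z" then show "fin_leq X x z"
    unfolding fin_leq_def by (rule subset_trans)
qed

lemma cont_mono:
  assumes "finite (topspace Y)" "continuous_map X Y f"
  shows "mono_into (topspace X) (fin_leq X) (topspace Y) (fin_leq Y) f"
  unfolding mono_into_def
proof (intro conjI ballI impI)
  fix x assume "x \<in> topspace X" then show "f x \<in> topspace Y"
    using assms(2) by (simp add: continuous_map_def Pi_iff)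
next
  fix x y assume xy: "x \<in> topspace X" "y \<in> topspace X" "fin_leq X x y"
  have fy: "f y \<in> topspace Y" using assms(2) xy by (simp add: continuous_map_def Pi_iff)
  define V where "V = minimal_open Y (f y)"
  have V: "openin Y V" unfolding V_def by (rule mo_open[OF assms(1) fy])
  have "openin X {z \<in> topspace X. f z \<in> V}" using assms(2) V unfolding continuous_map_def by blast
  moreover have "y \<in> {z \<in> topspace X. f z \<in> V}" using xy fy mo_in[OF fy] unfolding V_def by auto
  ultimately have "minimal_open X y \<subseteq> {z \<in> topspace X. f z \<in> V}" by (rule mo_sub)
  moreover have "x \<in> minimal_open X y" using xy mo_in[of x X] unfolding fin_leq_def by blast
  ultimately have "f x \<in> V" by blast
  then have "minimal_open Y (f x) \<subseteq> V" by (rule mo_sub[OF V])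
  then show "fin_leq Y (f x) (f y)" unfolding fin_leq_def V_def .
qed

lemma local_const:
  assumes fY: "finite (topspace Y)" and fX: "finite (topspace X)"
    and H: "continuous_map (prod_topology (top_of_set {0..1}) X) Y H"
    and t: "t \<in> {0..1::real}"
  shows "\<exists>e>0. \<forall>s\<in>{0..1}. dist s t < e \<longrightarrow> (\<forall>x\<in>topspace X. fin_leq Y (H (s,x)) (H (t,x)))"
proof -
  have one: "\<exists>e>0. \<forall>s\<in>{0..1}. dist s t < e \<longrightarrow> fin_leq Y (H (s,x)) (H (t,x))"
    if x: "x \<in> topspace X" for x
  proof -
    have Htx: "H (t,x) \<in> topspace Y" using H t x by (auto simp: continuous_map_def Pi_iff)
    define V where "V = minimal_open Y (H (t,x))"
    have V: "openin Y V" unfolding V_def by (rule mo_open[OF fY Htx])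
    define W where "W = {z \<in> topspace (prod_topology (top_of_set {0..1}) X). H z \<in> V}"
    have Wo: "openin (prod_topology (top_of_set {0..1}) X) W"
      using H V unfolding continuous_map_def W_def by blast
    have tW: "(t,x) \<in> W" unfolding W_def V_def using t x mo_in[OF Htx] by auto
    have "\<exists>U V'. openin (top_of_set {0..1}) U \<and> openin X V' \<and> t \<in> U \<and> x \<in> V' \<and> U \<times> V' \<subseteq> W"
      using openin_prod_topology_alt[THEN iffD1, OF Wo, rule_format, OF tW] .
    then obtain U V' where UV: "openin (top_of_set {0..1}) U" "openin X V'" "t \<in> U" "x \<in> V'" "U \<times> V' \<subseteq> W"
      by blast
    then obtain e where e: "e > 0" "\<forall>s\<in>{0..1}. dist s t < e \<longrightarrow> s \<in> U"
      unfolding openin_euclidean_subtopology_iff by blast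
    have "fin_leq Y (H (s,x)) (H (t,x))" if "s \<in> {0..1}" "dist s t < e" for s
    proof -
      have "(s,x) \<in> W" using e that UV by blast
      then have "H (s,x) \<in> V" unfolding W_def by blast
      then have "minimal_open Y (H (s,x)) \<subseteq> V" by (rule mo_sub[OF V])
      then show ?thesis unfolding fin_leq_def V_def .
    qed
    then show ?thesis using e by blast
  qed
  then obtain ee where ee: "\<forall>x\<in>topspace X. ee x > 0 \<and> (\<forall>s\<in>{0..1}. dist s t < ee x \<longrightarrow> fin_leq Y (H (s,x)) (H (t,x)))"
    by metis
  show ?thesis
  proof (cases "topspace X = {}")
    case True
    then show ?thesis by (intro exI[of _ 1]) auto
  next
    case False
    define e where "e = Min (ee ` topspace X)"
    have "e \<in> ee ` topspace X" unfolding e_def using fX False by simp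
    then have "e > 0" using ee by auto
    moreover have "e \<le> ee x" if "x \<in> topspace X" for x unfolding e_def using fX that by simp
    ultimately show ?thesis using ee by (intro exI[of _ e]) force
  qed
qed

lemma a1: "t \<in> {0..1::real} \<Longrightarrow> continuous_map X (top_of_set {0..1}) (\<lambda>x. t)"
  by (simp add: continuous_map_const)
lemma a2: "continuous_map X X (\<lambda>x. x)" using continuous_map_id[of X] by (simp add: id_def)
lemma a3: assumes "t \<in> {0..1::real}" "continuous_map (prod_topology (top_of_set {0..1}) X) Y H"
  shows "continuous_map X Y (\<lambda>x. H (t,x))"
proof -
  have "continuous_map X Y (H \<circ> (\<lambda>x. (t, x)))"
    by (rule continuous_map_compose[OF continuous_map_pairedI[OF a1[OF assms(1)] a2] assms(2)])
  then show ?thesis by (simp add: o_def)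
qed

lemma homotopy_fence:
  assumes fY: "finite (topspace Y)" and fX: "finite (topspace X)"
    and hw: "homotopic_with (\<lambda>x. True) X Y p q"
  shows "fence (topspace X) (fin_leq X) (topspace Y) (fin_leq Y) p q"
proof -
  have eq: "homotopic_with (\<lambda>x. True) X Y p q \<longleftrightarrow>
    (\<exists>h. continuous_map (prod_topology (top_of_set {0..1::real}) X) Y h \<and>
       (\<forall>x\<in>topspace X. h (0, x) = p x) \<and>
       (\<forall>x\<in>topspace X. h (1, x) = q x) \<and> (\<forall>t\<in>{0..1}. (\<lambda>x. True) (\<lambda>x. h (t, x))))"
    by (rule homotopic_with) simp
  obtain H where H: "continuous_map (prod_topology (top_of_set {0..1::real}) X) Y H"
    "\<forall>x\<in>topspace X. H (0, x) = p x" "\<forall>x\<in>topspace X. H (1, x) = q x"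
    using hw unfolding eq by blast
  let ?S = "topspace X" and ?T = "topspace Y"
  let ?F = "fence ?S (fin_leq X) ?T (fin_leq Y)"
  let ?st = "fstep ?S (fin_leq X) ?T (fin_leq Y)"
  define h where "h t = (\<lambda>x. H (t, x))" for t
  have hc: "continuous_map X Y (h t)" if "t \<in> {0..1}" for t
    unfolding h_def by (rule a3[OF that H(1)])
  have hm: "mono_into ?S (fin_leq X) ?T (fin_leq Y) (h t)" if "t \<in> {0..1}" for t
    by (rule cont_mono[OF fY hc[OF that]])
  have near: "\<exists>e>0. \<forall>s\<in>{0..1}. dist s t < e \<longrightarrow> ?st (h s) (h t) \<and> ?st (h t) (h s)"
    if t: "t \<in> {0..1}" for t
  proof -
    obtain e where e: "e > 0" "\<forall>s\<in>{0..1}. dist s t < e \<longrightarrow> (\<forall>x\<in>?S. fin_leq Y (H (s,x)) (H (t,x)))"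
      using local_const[OF fY fX H(1) t] by blast
    have "?st (h s) (h t) \<and> ?st (h t) (h s)" if "s \<in> {0..1}" "dist s t < e" for s
    proof -
      have le: "\<forall>x\<in>?S. fin_leq Y (h s x) (h t x)" using e(2) that unfolding h_def by blast
      show ?thesis unfolding fstep_def using hm[OF that(1)] hm[OF t] le by blast
    qed
    then show ?thesis using e(1) by blast
  qed
  define A where "A = {t \<in> {0..1::real}. ?F (h 0) (h t)}"
  have openA: "openin (top_of_set {0..1}) A"
    unfolding openin_euclidean_subtopology_iff
  proof (intro conjI ballI)
    show "A \<subseteq> {0..1}" unfolding A_def by blast
    fix t assume tA: "t \<in> A"
    then have t01: "t \<in> {0..1}" and Ft: "?F (h 0) (h t)" unfolding A_def by simp_all
    obtain e where e: "e > 0" "\<forall>s\<in>{0..1}. dist s t < e \<longrightarrow> ?st (h s) (h t) \<and> ?st (h t) (h s)"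
      using near[OF t01] by blast
    have "s \<in> A" if "s \<in> {0..1}" "dist s t < e" for s
    proof -
      have "?st (h t) (h s)" using e(2) that by blast
      then have "?F (h 0) (h s)" using Ft by (meson rtranclp.rtrancl_into_rtrancl)
      then show ?thesis using that(1) unfolding A_def by blast
    qed
    then show "\<exists>e>0. \<forall>x'\<in>{0..1}. dist x' t < e \<longrightarrow> x' \<in> A" using e(1) by blast
  qed
  have closedA: "closedin (top_of_set {0..1}) A"
    unfolding closedin_def
  proof (intro conjI)
    show "A \<subseteq> topspace (top_of_set {0..1})" unfolding A_def by auto
    show "openin (top_of_set {0..1}) (topspace (top_of_set {0..1}) - A)"
      unfolding openin_euclidean_subtopology_iff
    proof (intro conjI ballI)
      show "topspace (top_of_set {0..1}) - A \<subseteq> {0..1}" by simp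
      fix t assume tA: "t \<in> topspace (top_of_set {0..1::real}) - A"
      then have t: "t \<in> {0..1}" "\<not> ?F (h 0) (h t)" unfolding A_def by auto
      obtain e where e: "e > 0" "\<forall>s\<in>{0..1}. dist s t < e \<longrightarrow> ?st (h s) (h t) \<and> ?st (h t) (h s)"
        using near[OF t(1)] by blast
      have "s \<in> topspace (top_of_set {0..1}) - A" if "s \<in> {0..1}" "dist s t < e" for s
      proof -
        have st: "?st (h s) (h t)" using e(2) that by blast
        have "\<not> ?F (h 0) (h s)"
        proof
          assume "?F (h 0) (h s)"
          then have "?F (h 0) (h t)" using st by (meson rtranclp.rtrancl_into_rtrancl)
          then show False using t(2) by blast
        qed
        then have "s \<notin> A" unfolding A_def by blast
        then show ?thesis using that(1) by simp
      qed
      then show "\<exists>e>0. \<forall>x'\<in>{0..1}. dist x' t < e \<longrightarrow> x' \<in> topspace (top_of_set {0..1}) - A"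
        using e(1) by blast
    qed
  qed
  have "A = {} \<or> A = {0..1}"
    using connected_clopen[THEN iffD1, OF connected_Icc[of "0::real" 1], rule_format, OF conjI[OF openA closedA]] .
  moreover have "0 \<in> A" unfolding A_def by simp
  ultimately have "1 \<in> A" by auto
  then have F01: "?F (h 0) (h 1)" unfolding A_def by blast
  have cp: "continuous_map X Y p" "continuous_map X Y q"
    using homotopic_with_imp_continuous_maps[OF hw] by auto
  have le0: "\<forall>x\<in>?S. fin_leq Y (p x) (h 0 x)" using H(2) by (simp add: h_def fin_leq_def)
  have le1: "\<forall>x\<in>?S. fin_leq Y (h 1 x) (q x)" using H(3) by (simp add: h_def fin_leq_def)
  have m0: "mono_into ?S (fin_leq X) ?T (fin_leq Y) (h 0)" by (rule hm) simp
  have m1: "mono_into ?S (fin_leq X) ?T (fin_leq Y) (h 1)" by (rule hm) simp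
  have s0: "?st p (h 0)"
    unfolding fstep_def using cont_mono[OF fY cp(1)] m0 le0 by blast
  have s1: "?st (h 1) q"
    unfolding fstep_def using cont_mono[OF fY cp(2)] m1 le1 by blast
  have "?F p (h 1)" using s0 F01 by (meson converse_rtranclp_into_rtranclp)
  then show ?thesis using s1 by (meson rtranclp.rtrancl_into_rtrancl)
qed

lemma rank_bar_dz:
  assumes "finite_T0_space X"
  shows "rank_bar X = (if dz (fin_leq X) (topspace X) then 1 else 0)"
proof -
  have fin: "finite (topspace X)" using assms unfolding finite_T0_space_def by blast
  have lx: "labelling X = lab (topspace X)" unfolding labelling_def lab_def by simp
  note L = lab[OF fin]
  have card: "card (topspace X) = length (lab (topspace X))" using L distinct_card by metis
  have sm: "space_matrix X = GM (Mq (fin_leq X)) (lab (topspace X))"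
    unfolding space_matrix_def GM_def Mq_def lx Let_def by simp
  have po: "po (set (lab (topspace X))) (fin_leq X)" using po_top[OF assms] L by simp
  show ?thesis unfolding rank_bar_def sm card dz_def using rank_GM[OF conjunct1[OF L] po] by simp
qed

theorem mainTheorem8:
  fixes X :: "'a topology" and Y :: "'b topology"
  assumes "finite_T0_space X" and "finite_T0_space Y"
    and "X homotopy_equivalent_space Y"
  shows "rank_bar X = rank_bar Y"
proof -
  obtain f g where fg: "continuous_map X Y f" "continuous_map Y X g"
    "homotopic_with (\<lambda>x. True) X X (g \<circ> f) id" "homotopic_with (\<lambda>x. True) Y Y (f \<circ> g) id"
    using assms(3) unfolding homotopy_equivalent_space_def by blast
  have fX: "finite (topspace X)" and fY: "finite (topspace Y)"
    using assms(1,2) unfolding finite_T0_space_def by auto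
  have "dz (fin_leq X) (topspace X) \<longleftrightarrow> dz (fin_leq Y) (topspace Y)"
  proof (rule comb_main)
    show "finite (topspace X)" "finite (topspace Y)" by fact+
    show "po (topspace X) (fin_leq X)" "po (topspace Y) (fin_leq Y)" using po_top assms(1,2) by auto
    show "mono_into (topspace X) (fin_leq X) (topspace Y) (fin_leq Y) f" by (rule cont_mono[OF fY fg(1)])
    show "mono_into (topspace Y) (fin_leq Y) (topspace X) (fin_leq X) g" by (rule cont_mono[OF fX fg(2)])
    show "fence (topspace X) (fin_leq X) (topspace X) (fin_leq X) (g \<circ> f) id"
      by (rule homotopy_fence[OF fX fX fg(3)])
    show "fence (topspace Y) (fin_leq Y) (topspace Y) (fin_leq Y) (f \<circ> g) id"
      by (rule homotopy_fence[OF fY fY fg(4)])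
  qed
  then show ?thesis using rank_bar_dz[OF assms(1)] rank_bar_dz[OF assms(2)] by simp
qed

end
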